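(* Fix $n\in\mathbb N$ and for $j\in\mathbb Z$ put $\kappa(j)=\cos\big(\tfrac{j\pi}{2(n+1)}\big)$ and $\lambda(j)=\sin\big(\tfrac{j\pi}{2(n+1)}\big)$. Let $a\in\mathbb Z$ and let $f,g,h\in\{\kappa,-\kappa,\lambda,-\lambda\}$. (1) If $m\in2\mathbb Z$ and $|m|\le 2n$, then $\sum_{j=0}^{2n+1}(-1)^j f(a+mj)=0$. (2) If $s,t\in\mathbb Z$ with $\max\{|s|,|t|\}\le n-1$ and $s\equiv t\pmod 2$, then \[\sum_{j=0}^{2n+1}(-1)^j f(a+2j)\,g(sj)\,h(tj)=0=\sum_{j=0}^{2n+1}(-1)^j g(sj)\,h(tj).\] *)

theory Defs
  imports Complex_Main
begin

definition kappa :: "nat \<Rightarrow> int \<Rightarrow> real" where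
  "kappa n j = cos (real_of_int j * pi / (2 * (real n + 1)))"

definition lambda :: "nat \<Rightarrow> int \<Rightarrow> real" where
  "lambda n j = sin (real_of_int j * pi / (2 * (real n + 1)))"

definition trig_family :: "nat \<Rightarrow> (int \<Rightarrow> real) set" where
  "trig_family n = {kappa n, (\<lambda>j. - kappa n j), lambda n, (\<lambda>j. - lambda n j)}"

end

theory Submission
  imports Defs
begin

lemma core:
  fixes n::nat and k::int and c::real
  assumes ev: "even k" and kb: "\<bar>k\<bar> \<le> 2*int n"
  shows "(\<Sum>j=0..2*n+1. (-1::real)^j * cos (c + real_of_int k * real j * (pi/(2*(real n+1))))) = 0"
proof -
  define p where "p = real_of_int k * (pi/(2*(real n+1)))"
  define D where "D j = cos (c + (real j - 1/2)*p)" for j::nat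
  have e: "2*cos(p/2)*cos y = cos(y + p/2) + cos(y - p/2)" for y
    by (simp add: cos_add cos_diff)
  have tel: "(\<Sum>j<M. (-1::real)^j * (2*cos(p/2)*cos(c + real j * p))) = D 0 - (-1)^M * D M" for M
  proof (induction M)
    case 0 show ?case by simp
  next
    case (Suc M)
    have a: "c + (real (Suc M) - 1/2)*p = (c + real M * p) + p/2"
      "c + (real M - 1/2)*p = (c + real M * p) - p/2" by (simp_all add: algebra_simps)
    have h: "2*cos(p/2)*cos(c + real M * p) = D (Suc M) + D M"
      unfolding D_def a by (rule e)
    have "(\<Sum>j<Suc M. (-1::real)^j * (2*cos(p/2)*cos(c + real j * p)))
        = (D 0 - (-1)^M * D M) + (-1)^M * (D (Suc M) + D M)"
      by (simp only: sum.lessThan_Suc Suc.IH h)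
    also have "\<dots> = D 0 - (-1)^Suc M * D (Suc M)" by (simp add: algebra_simps)
    finally show ?case .
  qed
  obtain q where q: "k = 2*q" using ev by blast
  have Np: "real (2*n+2) * p = 2*pi*real_of_int q"
    unfolding p_def q by (simp add: field_simps)
  have DN: "D (2*n+2) = D 0"
  proof -
    have eqn: "c + (real (2*n+2) - 1/2)*p = (c - p/2) + (2*pi)*real_of_int q"
      using Np by (simp add: algebra_simps)
    have per: "cos (x + (2*pi)*real_of_int q) = cos x" for x by (simp add: cos_add)
    show ?thesis unfolding D_def eqn per by simp
  qed
  have kl0: "\<bar>k\<bar> < 2*int n + 2" using kb by linarith
  have "real_of_int \<bar>k\<bar> < real_of_int (2*int n + 2)" using kl0 by (simp only: of_int_less_iff)
  then have kl: "\<bar>real_of_int k\<bar> < 2*(real n+1)" by simp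
  have "\<bar>p/2\<bar> = \<bar>real_of_int k\<bar> / (2*(real n+1)) * (pi/2)"
    unfolding p_def by (simp add: abs_mult field_simps)
  also have "\<dots> < 1 * (pi/2)"
    by (rule mult_strict_right_mono) (use kl in auto)
  finally have "\<bar>p/2\<bar> < pi/2" by simp
  then have cpos: "cos (p/2) > 0" by (intro cos_gt_zero_pi) auto
  have rng: "{0..2*n+1} = {..<2*n+2}" by auto
  have "2*cos(p/2) * (\<Sum>j=0..2*n+1. (-1::real)^j * cos (c + real j * p)) = 0"
    unfolding rng sum_distrib_left using tel[of "2*n+2"] DN
    by (simp add: algebra_simps)
  then have "(\<Sum>j=0..2*n+1. (-1::real)^j * cos (c + real j * p)) = 0" using cpos by simp
  then show ?thesis unfolding p_def by (simp add: algebra_simps)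
qed

lemma fam:
  assumes "f \<in> trig_family n"
  shows "\<exists>ph. \<forall>x. f x = cos (real_of_int x * (pi/(2*(real n+1))) + ph)"
proof -
  have "f = kappa n \<or> f = (\<lambda>j. - kappa n j) \<or> f = lambda n \<or> f = (\<lambda>j. - lambda n j)"
    using assms unfolding trig_family_def by blast
  then show ?thesis
  proof (elim disjE)
    assume "f = kappa n" then show ?thesis unfolding kappa_def by (intro exI[of _ 0]) simp
  next
    assume "f = (\<lambda>j. - kappa n j)" then show ?thesis unfolding kappa_def
      by (intro exI[of _ pi]) (simp add: cos_add)
  next
    assume "f = lambda n" then show ?thesis unfolding lambda_def
      by (intro exI[of _ "-pi/2"]) (simp add: cos_diff)
  next
    assume "f = (\<lambda>j. - lambda n j)" then show ?thesis unfolding lambda_def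
      by (intro exI[of _ "pi/2"]) (simp add: cos_add)
  qed
qed

lemma e2: "cos B * cos E = (cos (B+E) + cos (B-E))/2" for B E :: real by (simp add: cos_add cos_diff)
lemma q4: "((x+y)/2+(z+w)/2)/2 = (x+y+z+w)/(4::real)" by (simp add: field_simps)
lemma e3: "cos A * cos B * cos E = (cos (A+B+E) + cos (A+B-E) + cos (A-B+E) + cos (A-B-E))/4"
      for A B E :: real
proof -
  have "cos A * cos B * cos E = (cos (A+B) * cos E + cos (A-B) * cos E)/2" by (simp add: e2 field_simps)
  also have "\<dots> = (cos (A+B+E) + cos (A+B-E) + cos (A-B+E) + cos (A-B-E))/4"
    unfolding e2 by (rule q4)
  finally show ?thesis .
qed
lemma lin4: assumes "F*G*H = (x+y+z+w)/4" shows "(r::real)*F*G*H = (r*x+r*y+r*z+r*w)/4"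
proof -
  have "r*F*G*H = r*((x+y+z+w)/4)" by (metis assms mult.assoc)
  then show ?thesis by (simp add: field_simps)
qed
lemma lin2: assumes "G*H = (x+y)/2" shows "(r::real)*G*H = (r*x+r*y)/2"
proof -
  have "r*G*H = r*((x+y)/2)" by (metis assms mult.assoc)
  then show ?thesis by (simp add: field_simps)
qed

theorem lemma4p10:
  fixes n :: nat and a :: int and f g h :: "int \<Rightarrow> real"
  assumes "f \<in> trig_family n" and "g \<in> trig_family n" and "h \<in> trig_family n"
  shows "(\<forall>m::int. even m \<and> \<bar>m\<bar> \<le> 2 * int n \<longrightarrow>
            (\<Sum>j=0..2*n+1. (-1::real)^j * f (a + m * int j)) = 0)
       \<and> (\<forall>s t :: int. max \<bar>s\<bar> \<bar>t\<bar> \<le> int n - 1 \<and> s mod 2 = t mod 2 \<longrightarrow>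
            (\<Sum>j=0..2*n+1. (-1::real)^j * f (a + 2 * int j) * g (s * int j) * h (t * int j)) = 0
          \<and> (\<Sum>j=0..2*n+1. (-1::real)^j * g (s * int j) * h (t * int j)) = 0)"
proof -
  define th where "th = pi/(2*(real n+1))"
  obtain pf where pf: "\<And>x. f x = cos (real_of_int x * th + pf)" using fam[OF assms(1)] th_def by blast
  obtain pg where pg: "\<And>x. g x = cos (real_of_int x * th + pg)" using fam[OF assms(2)] th_def by blast
  obtain ph where ph: "\<And>x. h x = cos (real_of_int x * th + ph)" using fam[OF assms(3)] th_def by blast
  have C: "even k \<Longrightarrow> \<bar>k\<bar> \<le> 2*int n \<Longrightarrow>
      (\<Sum>j=0..2*n+1. (-1::real)^j * cos (c + real_of_int k * real j * th)) = 0" for k c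
    using core unfolding th_def by blast
  have P1: "(\<Sum>j=0..2*n+1. (-1::real)^j * f (a + m * int j)) = 0"
    if "even m" "\<bar>m\<bar> \<le> 2 * int n" for m
  proof -
    have "(\<Sum>j=0..2*n+1. (-1::real)^j * f (a + m * int j))
       = (\<Sum>j=0..2*n+1. (-1::real)^j * cos ((real_of_int a * th + pf) + real_of_int m * real j * th))"
      by (intro sum.cong refl) (simp add: pf algebra_simps)
    then show ?thesis using C[OF that] by simp
  qed
  have P2: "(\<Sum>j=0..2*n+1. (-1::real)^j * f (a + 2 * int j) * g (s * int j) * h (t * int j)) = 0
          \<and> (\<Sum>j=0..2*n+1. (-1::real)^j * g (s * int j) * h (t * int j)) = 0"
    if st: "max \<bar>s\<bar> \<bar>t\<bar> \<le> int n - 1" "s mod 2 = t mod 2" for s t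
  proof
    have evs: "even (s+t)" "even (s-t)" "even (2+s+t)" "even (2+s-t)" "even (2-s+t)" "even (2-s-t)"
      using st(2) by presburger+
    have bds: "\<bar>s+t\<bar> \<le> 2*int n" "\<bar>s-t\<bar> \<le> 2*int n" "\<bar>2+s+t\<bar> \<le> 2*int n"
       "\<bar>2+s-t\<bar> \<le> 2*int n" "\<bar>2-s+t\<bar> \<le> 2*int n" "\<bar>2-s-t\<bar> \<le> 2*int n"
      using st(1) by arith+
    let ?c1 = "real_of_int a * th + pf + pg + ph"
    let ?c2 = "real_of_int a * th + pf + pg - ph"
    let ?c3 = "real_of_int a * th + pf - pg + ph"
    let ?c4 = "real_of_int a * th + pf - pg - ph"
    have "(\<Sum>j=0..2*n+1. (-1::real)^j * f (a + 2 * int j) * g (s * int j) * h (t * int j))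
      = (\<Sum>j=0..2*n+1. (-1::real)^j * cos (?c1 + real_of_int (2+s+t) * real j * th)
                    + (-1::real)^j * cos (?c2 + real_of_int (2+s-t) * real j * th)
                    + (-1::real)^j * cos (?c3 + real_of_int (2-s+t) * real j * th)
                    + (-1::real)^j * cos (?c4 + real_of_int (2-s-t) * real j * th)) / 4"
      unfolding sum_divide_distrib
    proof (intro sum.cong refl)
      fix j assume "j \<in> {0..2*n+1}"
      have x: "real_of_int (a + 2 * int j) * th + pf + (real_of_int (s * int j) * th + pg)
           + (real_of_int (t * int j) * th + ph) = ?c1 + real_of_int (2+s+t) * real j * th"
        "real_of_int (a + 2 * int j) * th + pf + (real_of_int (s * int j) * th + pg)
           - (real_of_int (t * int j) * th + ph) = ?c2 + real_of_int (2+s-t) * real j * th"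
        "real_of_int (a + 2 * int j) * th + pf - (real_of_int (s * int j) * th + pg)
           + (real_of_int (t * int j) * th + ph) = ?c3 + real_of_int (2-s+t) * real j * th"
        "real_of_int (a + 2 * int j) * th + pf - (real_of_int (s * int j) * th + pg)
           - (real_of_int (t * int j) * th + ph) = ?c4 + real_of_int (2-s-t) * real j * th"
        by (simp_all add: algebra_simps)
      show "(-1::real)^j * f (a + 2 * int j) * g (s * int j) * h (t * int j)
        = ((-1::real)^j * cos (?c1 + real_of_int (2+s+t) * real j * th)
                    + (-1::real)^j * cos (?c2 + real_of_int (2+s-t) * real j * th)
                    + (-1::real)^j * cos (?c3 + real_of_int (2-s+t) * real j * th)
                    + (-1::real)^j * cos (?c4 + real_of_int (2-s-t) * real j * th)) / 4"
        by (rule lin4) (simp only: pf pg ph e3 x)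
    qed
    also have "\<dots> = 0"
      unfolding sum.distrib
      using C[of "2+s+t" ?c1] C[of "2+s-t" ?c2] C[of "2-s+t" ?c3] C[of "2-s-t" ?c4] evs bds
      by simp
    finally show "(\<Sum>j=0..2*n+1. (-1::real)^j * f (a + 2 * int j) * g (s * int j) * h (t * int j)) = 0" .
    have "(\<Sum>j=0..2*n+1. (-1::real)^j * g (s * int j) * h (t * int j))
      = (\<Sum>j=0..2*n+1. (-1::real)^j * cos ((pg + ph) + real_of_int (s+t) * real j * th)
                    + (-1::real)^j * cos ((pg - ph) + real_of_int (s-t) * real j * th)) / 2"
      unfolding sum_divide_distrib
    proof (intro sum.cong refl)
      fix j assume "j \<in> {0..2*n+1}"
      have x: "real_of_int (s * int j) * th + pg + (real_of_int (t * int j) * th + ph)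
             = (pg + ph) + real_of_int (s+t) * real j * th"
        "real_of_int (s * int j) * th + pg - (real_of_int (t * int j) * th + ph)
             = (pg - ph) + real_of_int (s-t) * real j * th"
        by (simp_all add: algebra_simps)
      show "(-1::real)^j * g (s * int j) * h (t * int j)
        = ((-1::real)^j * cos ((pg + ph) + real_of_int (s+t) * real j * th)
                    + (-1::real)^j * cos ((pg - ph) + real_of_int (s-t) * real j * th)) / 2"
        by (rule lin2) (simp only: pg ph e2 x)
    qed
    also have "\<dots> = 0"
      unfolding sum.distrib
      using C[of "s+t" "pg+ph"] C[of "s-t" "pg-ph"] evs bds
      by simp
    finally show "(\<Sum>j=0..2*n+1. (-1::real)^j * g (s * int j) * h (t * int j)) = 0" .
  qed
  show ?thesis using P1 P2 by blast
qed

end
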